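(* Let $G$ be a finite connected graph with vertices $u,v$ such that $uv\in E(G)$, $\deg_G(u)\ge 2$ and $\deg_G(v)=1$. Let $G_v$ be obtained from $G$ by adding a new vertex $x$ and the edge $ux$. Then $\mathrm{cat}(G_v,a)=\mathrm{cat}(G,a)$ for all $a\in V(G)$, and $\mathrm{cat}(G_v,x)=1$. In particular $\mathrm{cat}(G_v)=\mathrm{cat}(G)$.
   Context: Cat Herding is played on a simple graph $G$. The cat first places its token on a vertex. Then the players alternate, the herder moving first: the herder deletes one edge of the current graph, and then, unless the cat's current vertex has degree $0$ in the current graph, the cat moves its token along a path with at least one edge in the current graph to a different vertex. The cat is captured when its vertex has degree $0$ in the current graph, and the game ends; the score is the number of edges deleted. For a finite graph $G$ and $v\in V(G)$, $\mathrm{cat}(G,v)$ is the score under optimal play (herder minimizing, cat maximizing) when the cat starts at $v$, and $\mathrm{cat}(G)=\max_{v}\mathrm{cat}(G,v)$. *)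

theory Defs
  imports Main
begin

definition simple_graph :: "'a set \<Rightarrow> 'a set set \<Rightarrow> bool" where
  "simple_graph V E \<longleftrightarrow> finite V \<and>
     (\<forall>e\<in>E. \<exists>x y. x \<noteq> y \<and> x \<in> V \<and> y \<in> V \<and> e = {x, y})"

definition adj_rel :: "'a set set \<Rightarrow> ('a \<times> 'a) set" where
  "adj_rel E = {(x, y). x \<noteq> y \<and> {x, y} \<in> E}"

definition connected_graph :: "'a set \<Rightarrow> 'a set set \<Rightarrow> bool" where
  "connected_graph V E \<longleftrightarrow> (\<forall>a\<in>V. \<forall>b\<in>V. (a, b) \<in> (adj_rel E)\<^sup>*)"

definition degree :: "'a set set \<Rightarrow> 'a \<Rightarrow> nat" where
  "degree E a = card {b. b \<noteq> a \<and> {a, b} \<in> E}"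

(* Game value with fuel n = number of remaining edges. If c is isolated, score 0.
   Otherwise herder deletes some e \<in> F (score +1); then the cat moves to some
   vertex c' \<noteq> c reachable from c in F - {e} (if none exists, i.e. c isolated, the
   cat is captured and nothing more is added). *)
fun catn :: "nat \<Rightarrow> 'a set set \<Rightarrow> 'a \<Rightarrow> nat" where
  "catn 0 F c = 0"
| "catn (Suc n) F c =
     (if degree F c = 0 then 0
      else Min ((\<lambda>e. 1 + Max (insert 0
              ((\<lambda>c'. catn n (F - {e}) c') `
                 {c'. c' \<noteq> c \<and> (c, c') \<in> (adj_rel (F - {e}))\<^sup>*}))) ` F))"

definition cat_at :: "'a set set \<Rightarrow> 'a \<Rightarrow> nat" where
  "cat_at E v = catn (card E) E v"

definition cat_num :: "'a set \<Rightarrow> 'a set set \<Rightarrow> nat" where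
  "cat_num V E = Max (cat_at E ` V)"

end

theory Submission imports Defs begin
definition val :: "'a set set \<Rightarrow> 'a \<Rightarrow> nat" where
  "val F c = catn (card F) F c"
definition rs :: "'a set set \<Rightarrow> 'a \<Rightarrow> 'a set" where
  "rs F c = {c'. c' \<noteq> c \<and> (c, c') \<in> (adj_rel F)\<^sup>*}"
definition opt :: "'a set set \<Rightarrow> 'a set \<Rightarrow> 'a \<Rightarrow> nat" where
  "opt F e c = 1 + Max (insert 0 (val (F - {e}) ` rs (F - {e}) c))"
definition wfg :: "'a set set \<Rightarrow> bool" where
  "wfg F \<longleftrightarrow> finite F \<and> (\<forall>e\<in>F. \<exists>a b. a \<noteq> b \<and> e = {a, b})"
definition isol :: "'a set set \<Rightarrow> 'a \<Rightarrow> bool" where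
  "isol F c \<longleftrightarrow> (\<forall>e\<in>F. c \<notin> e)"

lemma adj_iff[simp]: "(a, b) \<in> adj_rel F \<longleftrightarrow> a \<noteq> b \<and> {a, b} \<in> F"
  by (simp add: adj_rel_def)

lemma closed_reach:
  assumes "\<And>y z. y \<in> C \<Longrightarrow> y \<noteq> z \<Longrightarrow> {y, z} \<in> G \<Longrightarrow> z \<in> C" "c \<in> C"
    "(c, y) \<in> (adj_rel G)\<^sup>*"
  shows "y \<in> C"
  using assms(3)
proof induction
  case base then show ?case using assms(2) .
next
  case (step y z) then show ?case using assms(1) by auto
qed

lemma adj_mono: "F \<subseteq> G \<Longrightarrow> adj_rel F \<subseteq> adj_rel G"
  by (auto simp: adj_rel_def)

lemma reach_mono: "F \<subseteq> G \<Longrightarrow> (c, y) \<in> (adj_rel F)\<^sup>* \<Longrightarrow> (c, y) \<in> (adj_rel G)\<^sup>*"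
  using rtrancl_mono[OF adj_mono] by blast

lemma rs_mono: "F \<subseteq> G \<Longrightarrow> rs F c \<subseteq> rs G c"
  using reach_mono by (auto simp: rs_def)

lemma wfg_subset: "wfg G \<Longrightarrow> F \<subseteq> G \<Longrightarrow> wfg F"
  by (auto simp: wfg_def intro: finite_subset)

lemma wfg_insert: "wfg F \<Longrightarrow> a \<noteq> b \<Longrightarrow> wfg (insert {a, b} F)"
  by (auto simp: wfg_def)

lemma wfg_Diff: "wfg F \<Longrightarrow> wfg (F - A)"
  by (auto simp: wfg_def)

lemma rs_sub: "d \<in> rs F c \<Longrightarrow> d \<in> \<Union>F"
proof -
  assume "d \<in> rs F c"
  then have "(c, d) \<in> (adj_rel F)\<^sup>*" "d \<noteq> c" by (auto simp: rs_def)
  then obtain y where "(y, d) \<in> adj_rel F" by (metis rtranclE)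
  then show ?thesis by auto
qed

lemma union_finite: "wfg F \<Longrightarrow> finite (\<Union>F)"
  by (auto simp: wfg_def)

lemma rs_finite: "wfg F \<Longrightarrow> finite (rs F c)"
  using rs_sub union_finite by (meson finite_subset subsetI)

lemma rs_noniso: "d \<in> rs F c \<Longrightarrow> \<not> isol F d"
proof -
  assume "d \<in> rs F c"
  then have "(c, d) \<in> (adj_rel F)\<^sup>*" "d \<noteq> c" by (auto simp: rs_def)
  then obtain y where "(y, d) \<in> adj_rel F" by (metis rtranclE)
  then show ?thesis by (auto simp: isol_def)
qed

lemma iso_rs: "isol F c \<Longrightarrow> rs F c = {}"
proof (rule ccontr)
  assume "isol F c" "rs F c \<noteq> {}"
  then obtain d where "(c, d) \<in> (adj_rel F)\<^sup>*" "d \<noteq> c" by (auto simp: rs_def)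
  then obtain y where "(c, y) \<in> adj_rel F" by (metis converse_rtranclE)
  then show False using \<open>isol F c\<close> by (auto simp: isol_def)
qed

lemma val_rec:
  assumes "wfg F"
  shows "val F c = (if isol F c then 0 else Min ((\<lambda>e. opt F e c) ` F))"
proof (cases "isol F c")
  case True
  have em: "{b. b \<noteq> c \<and> {c, b} \<in> F} = {}" using True by (auto simp: isol_def)
  have "degree F c = 0" unfolding degree_def em by simp
  then show ?thesis using True by (cases "card F") (simp_all add: val_def)
next
  case False
  then obtain e0 where e0: "e0 \<in> F" "c \<in> e0" by (auto simp: isol_def)
  have fin: "finite F" using assms by (simp add: wfg_def)
  then obtain n where n: "card F = Suc n" using e0 by (cases "card F") auto
  from e0 assms obtain b where b: "b \<noteq> c" "{c, b} \<in> F"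
    unfolding wfg_def by (metis insert_commute insert_iff singletonD)
  have "{b. b \<noteq> c \<and> {c, b} \<in> F} \<subseteq> \<Union>F" by auto
  hence "finite {b. b \<noteq> c \<and> {c, b} \<in> F}" using union_finite[OF assms] finite_subset by blast
  hence "degree F c \<noteq> 0" using b by (auto simp: degree_def)
  have cd: "\<And>e. e \<in> F \<Longrightarrow> card (F - {e}) = n" using n fin by simp
  have "(\<lambda>e. 1 + Max (insert 0 ((\<lambda>c'. catn n (F - {e}) c') `
                 {c'. c' \<noteq> c \<and> (c, c') \<in> (adj_rel (F - {e}))\<^sup>*}))) ` F
        = (\<lambda>e. opt F e c) ` F"
    by (rule image_cong) (simp_all add: opt_def val_def rs_def cd fin n)
  then show ?thesis using False \<open>degree F c \<noteq> 0\<close> by (simp add: val_def n)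
qed

lemma val_iso: "wfg F \<Longrightarrow> isol F c \<Longrightarrow> val F c = 0"
  by (simp add: val_rec)

lemma val_le_opt: "wfg F \<Longrightarrow> e \<in> F \<Longrightarrow> val F c \<le> opt F e c"
  by (simp add: val_rec wfg_def)

lemma val_eq_opt: "wfg F \<Longrightarrow> \<not> isol F c \<Longrightarrow> \<exists>e\<in>F. val F c = opt F e c"
proof -
  assume a: "wfg F" "\<not> isol F c"
  then have "F \<noteq> {}" "finite F" by (auto simp: isol_def wfg_def)
  then have "Min ((\<lambda>e. opt F e c) ` F) \<in> (\<lambda>e. opt F e c) ` F" by (intro Min_in) auto
  then show ?thesis using a by (auto simp: val_rec)
qed

lemma val_ge1: "wfg F \<Longrightarrow> \<not> isol F c \<Longrightarrow> 1 \<le> val F c"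
  using val_eq_opt by (fastforce simp: opt_def)

lemma val_leaf:
  assumes "wfg F" "e \<in> F" "\<And>e'. e' \<in> F \<Longrightarrow> c \<in> e' \<Longrightarrow> e' = e"
  shows "val F c \<le> 1"
proof -
  have "isol (F - {e}) c" using assms(3) by (auto simp: isol_def)
  then have "opt F e c = 1" by (simp add: opt_def iso_rs)
  then show ?thesis using val_le_opt[OF assms(1,2), of c] by simp
qed

lemma maxle:
  assumes "finite A" "finite B" "\<And>a. a \<in> A \<Longrightarrow> \<exists>b\<in>B. f a \<le> g b"
  shows "Max (insert 0 (f ` A)) \<le> Max (insert (0::nat) (g ` B))"
proof -
  have "\<forall>y\<in>insert 0 (f ` A). y \<le> Max (insert 0 (g ` B))"
  proof
    fix y assume "y \<in> insert 0 (f ` A)"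
    then show "y \<le> Max (insert 0 (g ` B))"
    proof
      assume "y = 0" then show ?thesis by simp
    next
      assume "y \<in> f ` A"
      then obtain a where "a \<in> A" "y = f a" by auto
      then obtain b where "b \<in> B" "f a \<le> g b" using assms(3) by blast
      then have "g b \<le> Max (insert 0 (g ` B))" using assms(2) by (intro Max_ge) auto
      then show ?thesis using \<open>y = f a\<close> \<open>f a \<le> g b\<close> by simp
    qed
  qed
  then show ?thesis using assms(1) by (intro Max.boundedI) auto
qed

lemma maxle_k:
  assumes "finite A" "\<And>a. a \<in> A \<Longrightarrow> f a \<le> k"
  shows "Max (insert 0 (f ` A)) \<le> (k::nat)"
  using assms by (intro Max.boundedI) auto

lemma max_ge: "finite A \<Longrightarrow> a \<in> A \<Longrightarrow> f a \<le> Max (insert (0::nat) (f ` A))"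
  by (intro Max_ge) auto

lemma val_mono: "wfg G \<Longrightarrow> F \<subseteq> G \<Longrightarrow> val F c \<le> val G c"
proof (induction "card G" arbitrary: G F c rule: less_induct)
  case less
  have wF: "wfg F" by (rule wfg_subset[OF less.prems])
  show ?case
  proof (cases "isol F c")
    case True then show ?thesis using val_iso[OF wF True] by simp
  next
    case False
    then have nG: "\<not> isol G c" using less.prems by (auto simp: isol_def)
    obtain f where f: "f \<in> G" "val G c = opt G f c" using val_eq_opt[OF less.prems(1) nG] by blast
    have finG: "finite G" using less.prems(1) by (simp add: wfg_def)
    have lt: "card (G - {f}) < card G" by (rule card_Diff1_less[OF finG f(1)])
    obtain f' where f': "f' \<in> F" "F - {f'} \<subseteq> G - {f}"
    proof (cases "f \<in> F")
      case True
      show ?thesis by (rule that[of f]) (use True less.prems(2) in auto)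
    next
      case False
      obtain f' where "f' \<in> F" using \<open>\<not> isol F c\<close> by (auto simp: isol_def)
      show ?thesis by (rule that[of f']) (use \<open>f' \<in> F\<close> less.prems(2) False in auto)
    qed
    have "Max (insert 0 (val (F - {f'}) ` rs (F - {f'}) c))
          \<le> Max (insert 0 (val (G - {f}) ` rs (G - {f}) c))"
    proof (rule maxle)
      show "finite (rs (F - {f'}) c)" by (rule rs_finite[OF wfg_Diff[OF wF]])
      show "finite (rs (G - {f}) c)" by (rule rs_finite[OF wfg_Diff[OF less.prems(1)]])
      fix a assume "a \<in> rs (F - {f'}) c"
      then have "a \<in> rs (G - {f}) c" using rs_mono[OF f'(2)] by blast
      moreover have "val (F - {f'}) a \<le> val (G - {f}) a"
        using less.hyps[OF lt wfg_Diff[OF less.prems(1)] f'(2)] .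
      ultimately show "\<exists>b\<in>rs (G - {f}) c. val (F - {f'}) a \<le> val (G - {f}) b" by blast
    qed
    then have "opt F f' c \<le> opt G f c" by (simp add: opt_def)
    then show ?thesis using val_le_opt[OF wF f'(1), of c] f(2) by simp
  qed
qed

lemma reach_avoid:
  assumes "(d, a) \<notin> (adj_rel S)\<^sup>*" "(d, b) \<notin> (adj_rel S)\<^sup>*"
    "(d, y) \<in> (adj_rel (insert {a, b} S))\<^sup>*"
  shows "(d, y) \<in> (adj_rel S)\<^sup>*"
proof -
  have "y \<in> {y. (d, y) \<in> (adj_rel S)\<^sup>*}"
  proof (rule closed_reach[OF _ _ assms(3)])
    fix y z assume yz: "y \<in> {y. (d, y) \<in> (adj_rel S)\<^sup>*}" "y \<noteq> z" "{y, z} \<in> insert {a, b} S"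
    show "z \<in> {y. (d, y) \<in> (adj_rel S)\<^sup>*}"
    proof (cases "{y, z} = {a, b}")
      case True
      then have "y = a \<or> y = b" by (metis insert_iff doubleton_eq_iff)
      then show ?thesis using yz(1) assms(1,2) by auto
    next
      case False
      then have "(y, z) \<in> adj_rel S" using yz by auto
      then show ?thesis using yz(1) by (auto intro: rtrancl_into_rtrancl)
    qed
  qed simp
  then show ?thesis by simp
qed

lemma reach_fresh:
  assumes "x \<notin> \<Union>F" "u \<noteq> x" "c \<noteq> x" "(c, y) \<in> (adj_rel (insert {u, x} F))\<^sup>*"
  shows "(y \<noteq> x \<longrightarrow> (c, y) \<in> (adj_rel F)\<^sup>*) \<and> (y = x \<longrightarrow> (c, u) \<in> (adj_rel F)\<^sup>*)"
proof -
  let ?C = "{y. (y \<noteq> x \<longrightarrow> (c, y) \<in> (adj_rel F)\<^sup>*) \<and> (y = x \<longrightarrow> (c, u) \<in> (adj_rel F)\<^sup>*)}"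
  have "y \<in> ?C"
  proof (rule closed_reach[OF _ _ assms(4)])
    fix y z assume yz: "y \<in> ?C" "y \<noteq> z" "{y, z} \<in> insert {u, x} F"
    show "z \<in> ?C"
    proof (cases "{y, z} = {u, x}")
      case True
      then have "(y = u \<and> z = x) \<or> (y = x \<and> z = u)" by (metis doubleton_eq_iff)
      then show ?thesis
      proof
        assume "y = u \<and> z = x"
        then show ?thesis using yz(1) assms(2) by simp
      next
        assume "y = x \<and> z = u"
        then show ?thesis using yz(1) assms(2) by simp
      qed
    next
      case False
      then have "{y, z} \<in> F" using yz by auto
      then have "y \<noteq> x" "z \<noteq> x" using assms(1) by auto
      have "(c, y) \<in> (adj_rel F)\<^sup>*" using yz(1) \<open>y \<noteq> x\<close> by simp
      moreover have "(y, z) \<in> adj_rel F" using yz(2) \<open>{y, z} \<in> F\<close> by simp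
      ultimately have "(c, z) \<in> (adj_rel F)\<^sup>*" by (rule rtrancl_into_rtrancl)
      then show ?thesis using \<open>z \<noteq> x\<close> by simp
    qed
  qed (use assms(3) in simp)
  then show ?thesis by simp
qed

lemma val_loc:
  "wfg S \<Longrightarrow> (d, a) \<notin> (adj_rel S)\<^sup>* \<Longrightarrow> (d, b) \<notin> (adj_rel S)\<^sup>* \<Longrightarrow> a \<noteq> b
   \<Longrightarrow> val (insert {a, b} S) d \<le> val S d"
proof (induction "card S" arbitrary: S d rule: less_induct)
  case less
  show ?case
  proof (cases "{a, b} \<in> S")
    case True then show ?thesis by (simp add: insert_absorb)
  next
    case notin: False
    have wS': "wfg (insert {a, b} S)" by (rule wfg_insert[OF less.prems(1) less.prems(4)])
    have da: "d \<noteq> a" "d \<noteq> b" using less.prems(2,3) by (metis rtrancl.rtrancl_refl)+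
    show ?thesis
    proof (cases "isol S d")
      case True
      then have "isol (insert {a, b} S) d" using da by (auto simp: isol_def)
      then show ?thesis using val_iso[OF wS'] by simp
    next
      case False
      obtain f where f: "f \<in> S" "val S d = opt S f d" using val_eq_opt[OF less.prems(1) False] by blast
      have finS: "finite S" using less.prems(1) by (simp add: wfg_def)
      have lt: "card (S - {f}) < card S" by (rule card_Diff1_less[OF finS f(1)])
      have fne: "f \<noteq> {a, b}" using f notin by auto
      have eq: "insert {a, b} S - {f} = insert {a, b} (S - {f})" using fne by auto
      have wS1: "wfg (S - {f})" by (rule wfg_Diff[OF less.prems(1)])
      have na: "(d, a) \<notin> (adj_rel (S - {f}))\<^sup>*" "(d, b) \<notin> (adj_rel (S - {f}))\<^sup>*"
        using less.prems(2) reach_mono[of "S - {f}" S d a] less.prems(3) reach_mono[of "S - {f}" S d b]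
        by blast+
      have "Max (insert 0 (val (insert {a, b} (S - {f})) ` rs (insert {a, b} (S - {f})) d))
          \<le> Max (insert 0 (val (S - {f}) ` rs (S - {f}) d))"
      proof (rule maxle)
        show "finite (rs (insert {a, b} (S - {f})) d)"
          by (rule rs_finite[OF wfg_insert[OF wS1 less.prems(4)]])
        show "finite (rs (S - {f}) d)" by (rule rs_finite[OF wS1])
        fix y assume y: "y \<in> rs (insert {a, b} (S - {f})) d"
        then have dy: "(d, y) \<in> (adj_rel (S - {f}))\<^sup>*"
          using reach_avoid[OF na] by (auto simp: rs_def)
        then have yin: "y \<in> rs (S - {f}) d" using y by (auto simp: rs_def)
        have ya: "(y, a) \<notin> (adj_rel (S - {f}))\<^sup>*"
          using na(1) dy by (meson rtrancl_trans)
        have yb: "(y, b) \<notin> (adj_rel (S - {f}))\<^sup>*"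
          using na(2) dy by (meson rtrancl_trans)
        have "val (insert {a, b} (S - {f})) y \<le> val (S - {f}) y"
          by (rule less.hyps[OF lt wS1 ya yb less.prems(4)])
        with yin show "\<exists>b'\<in>rs (S - {f}) d. val (insert {a, b} (S - {f})) y \<le> val (S - {f}) b'"
          by blast
      qed
      then have "opt (insert {a, b} S) f d \<le> opt S f d" by (simp add: opt_def eq)
      then show ?thesis using val_le_opt[OF wS', of f d] f by simp
    qed
  qed
qed

lemma maxcmp:
  assumes wS: "wfg S" and vS: "v \<notin> \<Union>S" and uv: "u \<noteq> v" and wv: "w \<noteq> v" and uw: "u \<noteq> w"
    and dv: "d \<noteq> v"
    and H: "\<And>y. y \<noteq> v \<Longrightarrow> val (insert {u, v} S) y \<le> val (insert {u, w} S) y"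
  shows "Max (insert 0 (val (insert {u, v} S) ` rs (insert {u, v} S) d))
         \<le> Max (insert 0 (val (insert {u, w} S) ` rs (insert {u, w} S) d))"
proof (rule maxle)
  have wA: "wfg (insert {u, v} S)" by (rule wfg_insert[OF wS uv])
  have wB: "wfg (insert {u, w} S)" by (rule wfg_insert[OF wS uw])
  show "finite (rs (insert {u, v} S) d)" by (rule rs_finite[OF wA])
  show "finite (rs (insert {u, w} S) d)" by (rule rs_finite[OF wB])
  fix y assume y: "y \<in> rs (insert {u, v} S) d"
  then have dy: "(d, y) \<in> (adj_rel (insert {u, v} S))\<^sup>*" "y \<noteq> d" by (auto simp: rs_def)
  note rf = reach_fresh[OF vS uv dv dy(1)]
  show "\<exists>b\<in>rs (insert {u, w} S) d. val (insert {u, v} S) y \<le> val (insert {u, w} S) b"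
  proof (cases "y = v")
    case True
    have du: "(d, u) \<in> (adj_rel S)\<^sup>*" using rf True by simp
    have "val (insert {u, v} S) v \<le> 1"
      by (rule val_leaf[OF wA, of "{u, v}"]) (use vS in auto)
    obtain b where b: "b \<in> rs (insert {u, w} S) d"
    proof (cases "d = u")
      case True
      have "(u, w) \<in> adj_rel (insert {u, w} S)" using uw by simp
      then have "w \<in> rs (insert {u, w} S) d" using True uw by (auto simp: rs_def)
      then show ?thesis by (rule that)
    next
      case False
      have "(d, u) \<in> (adj_rel (insert {u, w} S))\<^sup>*"
        using reach_mono[of S "insert {u, w} S" d u] du by blast
      then have "u \<in> rs (insert {u, w} S) d" using False by (auto simp: rs_def)
      then show ?thesis by (rule that)
    qed
    have "1 \<le> val (insert {u, w} S) b" by (rule val_ge1[OF wB rs_noniso[OF b]])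
    then show ?thesis using b True \<open>val (insert {u, v} S) v \<le> 1\<close> by force
  next
    case False
    have "(d, y) \<in> (adj_rel S)\<^sup>*" using rf False by simp
    then have "(d, y) \<in> (adj_rel (insert {u, w} S))\<^sup>*"
      using reach_mono[of S "insert {u, w} S" d y] by blast
    then have "y \<in> rs (insert {u, w} S) d" using dy(2) by (auto simp: rs_def)
    moreover have "val (insert {u, v} S) y \<le> val (insert {u, w} S) y" by (rule H[OF False])
    ultimately show ?thesis by blast
  qed
qed

lemma val_L1:
  "wfg S \<Longrightarrow> v \<notin> \<Union>S \<Longrightarrow> u \<noteq> v \<Longrightarrow> w \<noteq> v \<Longrightarrow> u \<noteq> w \<Longrightarrow> {u, w} \<notin> S \<Longrightarrow> d \<noteq> v
   \<Longrightarrow> val (insert {u, v} S) d \<le> val (insert {u, w} S) d"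
proof (induction "card S" arbitrary: S d rule: less_induct)
  case less
  note P = less.prems
  define A where "A = insert {u, v} S"
  define B where "B = insert {u, w} S"
  have wA: "wfg A" unfolding A_def by (rule wfg_insert[OF P(1) P(3)])
  have wB: "wfg B" unfolding B_def by (rule wfg_insert[OF P(1) P(5)])
  have uvS: "{u, v} \<notin> S" using P(2) by auto
  have "val A d \<le> val B d"
  proof (cases "isol A d")
    case True then show ?thesis using val_iso[OF wA True] by simp
  next
    case False
    have nB: "\<not> isol B d" using False P(7) by (auto simp: isol_def A_def B_def)
    obtain f where f: "f \<in> B" "val B d = opt B f d" using val_eq_opt[OF wB nB] by blast
    show ?thesis
    proof (cases "f = {u, w}")
      case True
      have e1: "A - {{u, v}} = S" using uvS by (auto simp: A_def)
      have e2: "B - {f} = S" using True P(6) by (auto simp: B_def)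
      have "opt A {u, v} d = opt B f d" by (simp add: opt_def e1 e2)
      moreover have "{u, v} \<in> A" by (simp add: A_def)
      then have "val A d \<le> opt A {u, v} d" by (rule val_le_opt[OF wA])
      ultimately show ?thesis using f(2) by simp
    next
      case False
      have fS: "f \<in> S" using f(1) False by (simp add: B_def)
      have fne: "f \<noteq> {u, v}" using fS uvS by auto
      have finS: "finite S" using P(1) by (simp add: wfg_def)
      have lt: "card (S - {f}) < card S" by (rule card_Diff1_less[OF finS fS])
      have wS1: "wfg (S - {f})" by (rule wfg_Diff[OF P(1)])
      have eqA: "A - {f} = insert {u, v} (S - {f})" using fne by (auto simp: A_def)
      have eqB: "B - {f} = insert {u, w} (S - {f})" using False by (auto simp: B_def)
      have v1: "v \<notin> \<Union>(S - {f})" using P(2) by auto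
      have uw1: "{u, w} \<notin> S - {f}" using P(6) by auto
      have "Max (insert 0 (val (insert {u, v} (S - {f})) ` rs (insert {u, v} (S - {f})) d))
         \<le> Max (insert 0 (val (insert {u, w} (S - {f})) ` rs (insert {u, w} (S - {f})) d))"
        by (rule maxcmp[OF wS1 v1 P(3) P(4) P(5) P(7)])
           (rule less.hyps[OF lt wS1 v1 P(3) P(4) P(5) uw1])
      then have "opt A f d \<le> opt B f d" by (simp add: opt_def eqA eqB)
      moreover have "val A d \<le> opt A f d" by (rule val_le_opt[OF wA]) (simp add: A_def fS)
      ultimately show ?thesis using f(2) by simp
    qed
  qed
  then show ?case by (simp add: A_def B_def)
qed

lemma optD:
  assumes wF: "wfg F" and uvF: "{u, v} \<in> F" and uwF: "{u, w} \<in> F" and uv: "u \<noteq> v"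
    and uw: "u \<noteq> w" and wv: "w \<noteq> v" and leaf: "\<forall>e\<in>F. v \<in> e \<longrightarrow> e = {u, v}"
    and cv: "c \<noteq> v"
  shows "opt F {u, w} c \<le> opt F {u, v} c"
proof -
  define S where "S = F - {{u, v}} - {{u, w}}"
  have ne: "{u, v} \<noteq> {u, w}" using wv uv uw by (metis doubleton_eq_iff)
  have wS: "wfg S" unfolding S_def by (rule wfg_Diff[OF wfg_Diff[OF wF]])
  have eq1: "F - {{u, w}} = insert {u, v} S" using ne uvF by (auto simp: S_def)
  have eq2: "F - {{u, v}} = insert {u, w} S" using ne uwF by (auto simp: S_def)
  have vS: "v \<notin> \<Union>S" using leaf by (auto simp: S_def)
  have uwS: "{u, w} \<notin> S" by (simp add: S_def)
  have "Max (insert 0 (val (insert {u, v} S) ` rs (insert {u, v} S) c))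
         \<le> Max (insert 0 (val (insert {u, w} S) ` rs (insert {u, w} S) c))"
    by (rule maxcmp[OF wS vS uv wv uw cv])
       (rule val_L1[OF wS vS uv wv uw uwS])
  then show ?thesis by (simp add: opt_def eq1 eq2)
qed

lemma val_M:
  "wfg F \<Longrightarrow> {u, v} \<in> F \<Longrightarrow> u \<noteq> v \<Longrightarrow> \<forall>e\<in>F. v \<in> e \<longrightarrow> e = {u, v}
   \<Longrightarrow> \<exists>w. w \<noteq> v \<and> w \<noteq> u \<and> {u, w} \<in> F \<Longrightarrow> x \<notin> \<Union>F \<Longrightarrow> x \<noteq> u \<Longrightarrow> c \<noteq> x
   \<Longrightarrow> val (insert {u, x} F) c \<le> val F c"
proof (induction "card F" arbitrary: F c rule: less_induct)
  case less
  note P = less.prems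
  have ux: "u \<noteq> x" using P(7) by simp
  have xv: "x \<noteq> v" using P(2,6) by auto
  have wF': "wfg (insert {u, x} F)" by (rule wfg_insert[OF P(1) ux])
  have uxF: "{u, x} \<notin> F" using P(6) by auto
  show ?case
  proof (cases "c = v")
    case True
    have "val (insert {u, x} F) v \<le> 1"
    proof (rule val_leaf[OF wF', of "{u, v}"])
      show "{u, v} \<in> insert {u, x} F" using P(2) by simp
      fix e' assume e': "e' \<in> insert {u, x} F" "v \<in> e'"
      show "e' = {u, v}"
      proof (cases "e' = {u, x}")
        case True then show ?thesis using e'(2) P(3) xv by auto
      next
        case False then have "e' \<in> F" using e'(1) by simp
        then show ?thesis using P(4) e'(2) by blast
      qed
    qed
    moreover have "\<not> isol F v" using P(2) by (auto simp: isol_def)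
    then have "1 \<le> val F v" by (rule val_ge1[OF P(1)])
    ultimately show ?thesis using True by simp
  next
    case cv: False
    show ?thesis
    proof (cases "isol F c")
      case True
      have "c \<noteq> u" using True P(2) by (auto simp: isol_def)
      then have "isol (insert {u, x} F) c" using True P(8) by (auto simp: isol_def)
      then show ?thesis using val_iso[OF wF'] by simp
    next
      case nF: False
      have K: "val (insert {u, x} F) c \<le> opt F e c" if eF: "e \<in> F" and euv: "e \<noteq> {u, v}" for e
      proof -
        define F1 where "F1 = F - {e}"
        define F2 where "F2 = insert {u, x} F1"
        have eqF: "insert {u, x} F - {e} = F2" using eF uxF by (auto simp: F1_def F2_def)
        have wF1: "wfg F1" unfolding F1_def by (rule wfg_Diff[OF P(1)])
        have wF2: "wfg F2" unfolding F2_def by (rule wfg_insert[OF wF1 ux])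
        have F1F: "F1 \<subseteq> F" by (auto simp: F1_def)
        have x1: "x \<notin> \<Union>F1" using P(6) by (auto simp: F1_def)
        have uv1: "{u, v} \<in> F1" using P(2) euv by (simp add: F1_def)
        have leaf1: "\<forall>e\<in>F1. v \<in> e \<longrightarrow> e = {u, v}" using P(4) by (simp add: F1_def)
        have finF: "finite F" using P(1) by (simp add: wfg_def)
        have lt: "card F1 < card F" unfolding F1_def by (rule card_Diff1_less[OF finF eF])
        have lv2: "val F2 v \<le> 1"
        proof (rule val_leaf[OF wF2, of "{u, v}"])
          show "{u, v} \<in> F2" using uv1 by (simp add: F2_def)
          fix e' assume e': "e' \<in> F2" "v \<in> e'"
          show "e' = {u, v}"
          proof (cases "e' = {u, x}")
            case True then show ?thesis using e'(2) P(3) xv by auto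
          next
            case False then have "e' \<in> F1" using e'(1) by (simp add: F2_def)
            then show ?thesis using leaf1 e'(2) by blast
          qed
        qed
        have lx2: "val F2 x \<le> 1"
        proof (rule val_leaf[OF wF2, of "{u, x}"])
          show "{u, x} \<in> F2" by (simp add: F2_def)
          fix e' assume e': "e' \<in> F2" "x \<in> e'"
          show "e' = {u, x}"
          proof (rule ccontr)
            assume "e' \<noteq> {u, x}"
            then have "e' \<in> F1" using e'(1) by (simp add: F2_def)
            then show False using x1 e'(2) by blast
          qed
        qed
        have le1: "val (insert {u, x} F) c \<le> opt (insert {u, x} F) e c"
          by (rule val_le_opt[OF wF']) (simp add: eF)
        have "Max (insert 0 (val F2 ` rs F2 c)) \<le> Max (insert 0 (val F1 ` rs F1 c))"
        proof (cases "\<exists>w. w \<noteq> v \<and> w \<noteq> u \<and> {u, w} \<in> F1")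
          case True
          have IH: "val F2 y \<le> val F1 y" if "y \<noteq> x" for y
            unfolding F2_def by (rule less.hyps[OF lt wF1 uv1 P(3) leaf1 True x1 P(7) that])
          show ?thesis
          proof (rule maxle)
            show "finite (rs F2 c)" by (rule rs_finite[OF wF2])
            show "finite (rs F1 c)" by (rule rs_finite[OF wF1])
            fix y assume y: "y \<in> rs F2 c"
            then have dy: "(c, y) \<in> (adj_rel (insert {u, x} F1))\<^sup>*" "y \<noteq> c"
              by (auto simp: rs_def F2_def)
            note rf = reach_fresh[OF x1 ux P(8) dy(1)]
            show "\<exists>b\<in>rs F1 c. val F2 y \<le> val F1 b"
            proof (cases "y = x")
              case True
              have cu: "(c, u) \<in> (adj_rel F1)\<^sup>*" using rf True by simp
              obtain b where b: "b \<in> rs F1 c"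
              proof (cases "c = u")
                case True
                have "(u, v) \<in> adj_rel F1" using uv1 P(3) by simp
                then have "v \<in> rs F1 c" using True P(3) by (auto simp: rs_def)
                then show ?thesis by (rule that)
              next
                case False
                then have "u \<in> rs F1 c" using cu by (auto simp: rs_def)
                then show ?thesis by (rule that)
              qed
              have "1 \<le> val F1 b" by (rule val_ge1[OF wF1 rs_noniso[OF b]])
              then show ?thesis using b True lx2 by force
            next
              case False
              have "(c, y) \<in> (adj_rel F1)\<^sup>*" using rf False by simp
              then have "y \<in> rs F1 c" using dy(2) by (auto simp: rs_def)
              then show ?thesis using IH[OF False] by blast
            qed
          qed
        next
          case False
          have N: "z = v \<or> z = u" if "{u, z} \<in> F1" for z using False that by blast
          show ?thesis
          proof (cases "c = u")
            case True
            have C: "y \<in> {u, v, x}" if "(u, y) \<in> (adj_rel F2)\<^sup>*" for y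
            proof (rule closed_reach[OF _ _ that])
              fix y z assume yz: "y \<in> {u, v, x}" "y \<noteq> z" "{y, z} \<in> F2"
              show "z \<in> {u, v, x}"
              proof (cases "{y, z} = {u, x}")
                case True then show ?thesis by (metis doubleton_eq_iff insertCI)
              next
                case False
                then have yzF1: "{y, z} \<in> F1" using yz(3) by (simp add: F2_def)
                show ?thesis
                proof -
                  { assume "y = u" then have ?thesis using N yzF1 by auto }
                  moreover
                  { assume "y = v"
                    then have "{y, z} = {u, v}" using leaf1 yzF1 by auto
                    then have ?thesis by (metis doubleton_eq_iff insertCI) }
                  moreover
                  { assume "y = x" then have ?thesis using x1 yzF1 by auto }
                  ultimately show ?thesis using yz(1) by blast
                qed
              qed
            qed simp
            have "Max (insert 0 (val F2 ` rs F2 c)) \<le> 1"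
            proof (rule maxle_k)
              show "finite (rs F2 c)" by (rule rs_finite[OF wF2])
              fix y assume "y \<in> rs F2 c"
              then have "y \<in> {u, v, x}" "y \<noteq> u" using C True by (auto simp: rs_def)
              then show "val F2 y \<le> 1" using lv2 lx2 by auto
            qed
            moreover have "v \<in> rs F1 c"
            proof -
              have "(u, v) \<in> adj_rel F1" using uv1 P(3) by simp
              then show ?thesis using True P(3) by (auto simp: rs_def)
            qed
            then have "val F1 v \<le> Max (insert 0 (val F1 ` rs F1 c))"
              by (rule max_ge[OF rs_finite[OF wF1]])
            moreover have "1 \<le> val F1 v"
              by (rule val_ge1[OF wF1 rs_noniso[OF \<open>v \<in> rs F1 c\<close>]])
            ultimately show ?thesis by linarith
          next
            case cu: False
            let ?C = "- {u, v, x}"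
            have Cl: "y' \<in> ?C" if "y \<in> ?C" "(y, y') \<in> (adj_rel F2)\<^sup>*" for y y'
            proof (rule closed_reach[OF _ that(1) that(2)])
              fix y z assume yz: "y \<in> ?C" "y \<noteq> z" "{y, z} \<in> F2"
              show "z \<in> ?C"
              proof (cases "{y, z} = {u, x}")
                case True
                then have "y = u \<or> y = x" by (metis doubleton_eq_iff)
                then show ?thesis using yz(1) by auto
              next
                case False
                then have yzF1: "{y, z} \<in> F1" using yz(3) by (simp add: F2_def)
                have "z \<noteq> u"
                proof
                  assume "z = u"
                  then have "{u, y} \<in> F1" using yzF1 by (simp add: insert_commute)
                  then show False using N yz(1) by auto
                qed
                moreover have "z \<noteq> v"
                proof
                  assume "z = v"
                  then have "{y, z} = {u, v}" using leaf1 yzF1 by auto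
                  then show False using yz(1) \<open>z = v\<close> by (metis doubleton_eq_iff ComplD insertCI)
                qed
                moreover have "z \<noteq> x" using x1 yzF1 by auto
                ultimately show ?thesis by auto
              qed
            qed
            have cC: "c \<in> ?C" using cu cv P(8) by auto
            show ?thesis
            proof (rule maxle)
              show "finite (rs F2 c)" by (rule rs_finite[OF wF2])
              show "finite (rs F1 c)" by (rule rs_finite[OF wF1])
              fix y assume y: "y \<in> rs F2 c"
              then have dy: "(c, y) \<in> (adj_rel (insert {u, x} F1))\<^sup>*" "y \<noteq> c"
                by (auto simp: rs_def F2_def)
              have yC: "y \<in> ?C" using Cl[OF cC] dy(1) by (simp add: F2_def)
              then have "y \<noteq> x" by auto
              then have "(c, y) \<in> (adj_rel F1)\<^sup>*" using reach_fresh[OF x1 ux P(8) dy(1)] by simp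
              then have yin: "y \<in> rs F1 c" using dy(2) by (auto simp: rs_def)
              have nu: "(y, u) \<notin> (adj_rel F1)\<^sup>*"
              proof
                assume "(y, u) \<in> (adj_rel F1)\<^sup>*"
                then have "(y, u) \<in> (adj_rel F2)\<^sup>*"
                  using reach_mono[of F1 F2 y u] by (auto simp: F2_def)
                then show False using Cl[OF yC] by auto
              qed
              have nx: "(y, x) \<notin> (adj_rel F1)\<^sup>*"
              proof
                assume "(y, x) \<in> (adj_rel F1)\<^sup>*"
                then have "(y, x) \<in> (adj_rel F2)\<^sup>*"
                  using reach_mono[of F1 F2 y x] by (auto simp: F2_def)
                then show False using Cl[OF yC] by auto
              qed
              have "val F2 y \<le> val F1 y" unfolding F2_def by (rule val_loc[OF wF1 nu nx ux])
              then show "\<exists>b\<in>rs F1 c. val F2 y \<le> val F1 b" using yin by blast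
            qed
          qed
        qed
        then have "opt (insert {u, x} F) e c \<le> opt F e c" by (simp add: opt_def eqF F1_def)
        then show ?thesis using le1 by simp
      qed
      obtain e0 where e0: "e0 \<in> F" "val F c = opt F e0 c" using val_eq_opt[OF P(1) nF] by blast
      show ?thesis
      proof (cases "e0 = {u, v}")
        case True
        obtain w where w: "w \<noteq> v" "w \<noteq> u" "{u, w} \<in> F" using P(5) by blast
        have ne: "{u, w} \<noteq> {u, v}" using w P(3) by (metis doubleton_eq_iff)
        have "val (insert {u, x} F) c \<le> opt F {u, w} c" by (rule K[OF w(3) ne])
        also have "\<dots> \<le> opt F {u, v} c"
          by (rule optD[OF P(1) P(2) w(3) P(3) w(2)[symmetric] w(1) P(4) cv])
        finally show ?thesis using e0 True by simp
      next
        case False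
        then show ?thesis using K[OF e0(1) False] e0(2) by simp
      qed
    qed
  qed
qed

lemma cat_at_val: "cat_at E a = val E a"
  by (simp add: cat_at_def val_def)

theorem mainTheorem3:
  fixes V :: "'a set" and E :: "'a set set" and u v x :: 'a
  assumes "simple_graph V E"
    and "connected_graph V E"
    and "{u, v} \<in> E"
    and "degree E u \<ge> 2"
    and "degree E v = 1"
    and "x \<notin> V"
  shows "(\<forall>a\<in>V. cat_at (insert {u, x} E) a = cat_at E a)
         \<and> cat_at (insert {u, x} E) x = 1
         \<and> cat_num (insert x V) (insert {u, x} E) = cat_num V E"
proof -
  have finV: "finite V" using assms(1) by (simp add: simple_graph_def)
  have edges: "\<forall>e\<in>E. \<exists>a b. a \<noteq> b \<and> a \<in> V \<and> b \<in> V \<and> e = {a, b}"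
    using assms(1) by (simp add: simple_graph_def)
  have EV: "E \<subseteq> Pow V"
  proof
    fix e assume "e \<in> E"
    then obtain a b where "a \<in> V" "b \<in> V" "e = {a, b}" using bspec[OF edges] by blast
    then show "e \<in> Pow V" by simp
  qed
  have finE: "finite E" using finite_subset[OF EV] finV by simp
  have wE: "wfg E" unfolding wfg_def
  proof (intro conjI finE ballI)
    fix e assume "e \<in> E"
    then obtain a b where "a \<noteq> b" "e = {a, b}" using bspec[OF edges] by blast
    then show "\<exists>a b. a \<noteq> b \<and> e = {a, b}" by blast
  qed
  have xE: "x \<notin> \<Union>E" using EV assms(6) by blast
  have uv: "u \<noteq> v" "u \<in> V" "v \<in> V"
  proof -
    obtain a b where "a \<noteq> b" "a \<in> V" "b \<in> V" "{u, v} = {a, b}" using bspec[OF edges assms(3)] by blast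
    then show "u \<noteq> v" "u \<in> V" "v \<in> V" by (metis doubleton_eq_iff)+
  qed
  have ux: "u \<noteq> x" using uv(2) assms(6) by blast
  define NV where "NV = {b. b \<noteq> v \<and> {v, b} \<in> E}"
  have "card NV = 1" using assms(5) by (simp add: degree_def NV_def)
  then obtain z where z: "NV = {z}" by (rule card_1_singletonE)
  have "u \<in> NV" using uv(1) assms(3) by (simp add: NV_def insert_commute)
  then have NVu: "NV = {u}" using z by simp
  have leaf: "\<forall>e\<in>E. v \<in> e \<longrightarrow> e = {u, v}"
  proof (intro ballI impI)
    fix e assume e: "e \<in> E" "v \<in> e"
    then obtain a b where ab: "a \<noteq> b" "e = {a, b}" using bspec[OF edges e(1)] by blast
    show "e = {u, v}"
    proof (cases "a = v")
      case True
      then have "b \<in> NV" using ab e by (auto simp: NV_def)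
      then show ?thesis using NVu ab True by (simp add: insert_commute)
    next
      case False
      then have "b = v" using ab e by auto
      then have "a \<in> NV" using ab e by (auto simp: NV_def insert_commute)
      then show ?thesis using NVu ab \<open>b = v\<close> by simp
    qed
  qed
  define NU where "NU = {b. b \<noteq> u \<and> {u, b} \<in> E}"
  have "2 \<le> card NU" using assms(4) by (simp add: degree_def NU_def)
  have exw: "\<exists>w. w \<noteq> v \<and> w \<noteq> u \<and> {u, w} \<in> E"
  proof (rule ccontr)
    assume "\<not> ?thesis"
    then have "NU \<subseteq> {v}" by (auto simp: NU_def)
    then have "card NU \<le> 1" using card_mono[of "{v}" NU] by simp
    then show False using \<open>2 \<le> card NU\<close> by simp
  qed
  have wE': "wfg (insert {u, x} E)" by (rule wfg_insert[OF wE ux])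
  have P1: "\<forall>a\<in>V. cat_at (insert {u, x} E) a = cat_at E a"
  proof
    fix a assume a: "a \<in> V"
    then have ax: "a \<noteq> x" using assms(6) by blast
    have "val (insert {u, x} E) a \<le> val E a"
      by (rule val_M[OF wE assms(3) uv(1) leaf exw xE ux[symmetric] ax])
    moreover have "val E a \<le> val (insert {u, x} E) a"
      by (rule val_mono[OF wE']) blast
    ultimately show "cat_at (insert {u, x} E) a = cat_at E a" by (simp add: cat_at_val)
  qed
  have P2: "cat_at (insert {u, x} E) x = 1"
  proof -
    have "val (insert {u, x} E) x \<le> 1"
    proof (rule val_leaf[OF wE', of "{u, x}"])
      show "{u, x} \<in> insert {u, x} E" by simp
      fix e' assume e': "e' \<in> insert {u, x} E" "x \<in> e'"
      show "e' = {u, x}"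
      proof (rule ccontr)
        assume "e' \<noteq> {u, x}"
        then have "e' \<in> E" using e'(1) by simp
        then show False using xE e'(2) by blast
      qed
    qed
    moreover have "\<not> isol (insert {u, x} E) x" by (auto simp: isol_def)
    then have "1 \<le> val (insert {u, x} E) x" by (rule val_ge1[OF wE'])
    ultimately show ?thesis by (simp add: cat_at_val)
  qed
  have P3: "cat_num (insert x V) (insert {u, x} E) = cat_num V E"
  proof -
    have img1: "cat_at (insert {u, x} E) ` V = cat_at E ` V"
      using P1 by (intro image_cong) auto
    have img: "cat_at (insert {u, x} E) ` insert x V = insert 1 (cat_at E ` V)"
      by (simp only: image_insert img1 P2)
    have ne: "cat_at E ` V \<noteq> {}" using uv(2) by blast
    have fin: "finite (cat_at E ` V)" using finV by simp
    have "\<not> isol E u" using assms(3) by (auto simp: isol_def)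
    then have "1 \<le> val E u" by (rule val_ge1[OF wE])
    then have "1 \<le> Max (cat_at E ` V)"
      using Max_ge[OF fin, of "cat_at E u"] uv(2) by (simp add: cat_at_val)
    then show ?thesis unfolding cat_num_def img using Max_insert[OF fin ne, of 1]
      by (simp add: max_def)
  qed
  show ?thesis using P1 P2 P3 by blast
qed

end
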